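(* Let $\Omega$ be a topological space. Suppose either (a) $\mathcal{A}$ is an algebra of continuous real-valued functions on $\Omega$, closed in the compact-open topology and containing all constants; or (b) $\mathcal{B}$ is a complex algebra of continuous complex-valued functions on $\Omega$, closed in the compact-open topology and containing all constants, and $\mathcal{A}=\{\mathrm{Re}\,b\mid b\in\mathcal{B}\}$. Let $\mathcal{F}$ be the complete lattice cone generated by $\mathcal{A}$. Then for every compact $K\subset\Omega$ and every $C\geq1$, $$\mathrm{clConv}_{\mathcal{F}}K=\{\omega\in\Omega\mid a(\omega)\leq C\sup_K|a|\text{ for all }a\in\mathcal{A}\}.$$ Moreover, in case (b) these sets also coincide with $\{\omega\in\Omega\mid |b(\omega)|\leq C\sup_K|b|\text{ for all }b\in\mathcal{B}\}$.
   Context: The complete lattice cone generated by $\mathcal{A}$ is the smallest set of functions $\Omega\to(-\infty,\infty]$ containing $\mathcal{A}$, closed under nonnegative linear combinations and pointwise suprema of arbitrary families. $\mathrm{clConv}_{\mathcal{F}}K=\{\omega\in\Omega\mid f(\omega)\leq\sup f(K)\text{ for all }f\in\mathcal{F}\}$. The compact-open topology is given by the seminorms $\sup_K|\cdot|$, $K$ compact. *)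

theory Defs
  imports "HOL-Analysis.Analysis" "HOL-Library.Extended_Real"
begin

text \<open>Closedness of a set of continuous functions in the compact-open topology
  (topology of uniform convergence on compact sets, given by the seminorms
  sup over K of the absolute value, K compact).  A basic neighbourhood is given by
  one compact set (finite unions of compacts are compact) and one radius.\<close>
definition CO_closed :: "('a::topological_space \<Rightarrow> 'b::real_normed_vector) set \<Rightarrow> bool" where
  "CO_closed S \<longleftrightarrow>
     (\<forall>f. continuous_on UNIV f \<and>
          (\<forall>K. compact K \<longrightarrow> (\<forall>e>0. \<exists>g\<in>S. \<forall>x\<in>K. norm (f x - g x) < e))
          \<longrightarrow> f \<in> S)"

definition real_CO_algebra :: "('a::topological_space \<Rightarrow> real) set \<Rightarrow> bool" where
  "real_CO_algebra A \<longleftrightarrow>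
     (\<forall>f\<in>A. continuous_on UNIV f) \<and>
     (\<forall>f\<in>A. \<forall>g\<in>A. (\<lambda>x. f x + g x) \<in> A) \<and>
     (\<forall>f\<in>A. \<forall>g\<in>A. (\<lambda>x. f x * g x) \<in> A) \<and>
     (\<forall>c. \<forall>f\<in>A. (\<lambda>x. c * f x) \<in> A) \<and>
     (\<forall>c. (\<lambda>x. c) \<in> A) \<and>
     CO_closed A"

definition complex_CO_algebra :: "('a::topological_space \<Rightarrow> complex) set \<Rightarrow> bool" where
  "complex_CO_algebra B \<longleftrightarrow>
     (\<forall>f\<in>B. continuous_on UNIV f) \<and>
     (\<forall>f\<in>B. \<forall>g\<in>B. (\<lambda>x. f x + g x) \<in> B) \<and>
     (\<forall>f\<in>B. \<forall>g\<in>B. (\<lambda>x. f x * g x) \<in> B) \<and>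
     (\<forall>c. \<forall>f\<in>B. (\<lambda>x. c * f x) \<in> B) \<and>
     (\<forall>c. (\<lambda>x. c) \<in> B) \<and>
     CO_closed B"

text \<open>The complete lattice cone generated by A: smallest set of functions into
  (-\<infinity>,\<infinity>] (represented in ereal; -\<infinity> is never attained) containing A, closed under
  nonnegative linear combinations and pointwise suprema of (nonempty) families.\<close>
inductive_set lattice_cone :: "('a \<Rightarrow> real) set \<Rightarrow> ('a \<Rightarrow> ereal) set"
  for A :: "('a \<Rightarrow> real) set" where
  base: "a \<in> A \<Longrightarrow> (\<lambda>x. ereal (a x)) \<in> lattice_cone A"
| lincomb: "f \<in> lattice_cone A \<Longrightarrow> g \<in> lattice_cone A \<Longrightarrow> c \<ge> 0 \<Longrightarrow> d \<ge> 0 \<Longrightarrow>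
     (\<lambda>x. ereal c * f x + ereal d * g x) \<in> lattice_cone A"
| sup: "S \<noteq> {} \<Longrightarrow> (\<And>f. f \<in> S \<Longrightarrow> f \<in> lattice_cone A) \<Longrightarrow>
     (\<lambda>x. SUP f\<in>S. f x) \<in> lattice_cone A"

definition clConv :: "('a \<Rightarrow> ereal) set \<Rightarrow> 'a set \<Rightarrow> 'a set" where
  "clConv F K = {\<omega>. \<forall>f\<in>F. f \<omega> \<le> (SUP k\<in>K. f k)}"

end

theory Submission
  imports Defs
begin


lemma pow_bound:
  fixes x M C :: real
  assumes "0 \<le> x" "0 \<le> M" "\<forall>n. x^n \<le> C * M^n"
  shows "x \<le> M"
proof (rule ccontr)
  assume "\<not> x \<le> M" hence xM: "M < x" by simp
  show False
  proof (cases "M = 0")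
    case True
    then have "x \<le> 0" using assms(3)[rule_format, of 1] by simp
    with xM True show False by simp
  next
    case False
    hence Mp: "M > 0" using assms by simp
    have "1 < x/M" using xM Mp by simp
    then obtain n where n: "C < (x/M)^n" using real_arch_pow by blast
    have "(x/M)^n \<le> C" using assms(3) Mp by (simp add: power_divide pos_divide_le_eq)
    with n show False by simp
  qed
qed

lemma ereal_le_Cmul: "0 \<le> y \<Longrightarrow> 1 \<le> C \<Longrightarrow> y \<le> ereal C * (y::ereal)"
  by (cases y) (auto simp: mult_le_cancel_right1)

lemma ereal_split:
  assumes "u \<noteq> -\<infinity>" "v \<noteq> -\<infinity>" "c > 0" "d > 0" "ereal x < ereal c * u + ereal d * v"
  shows "\<exists>x1 x2. ereal x1 < u \<and> ereal x2 < v \<and> x = c*x1 + d*x2"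
proof (cases u)
  case (real r)
  show ?thesis
  proof (cases v)
    case (real t)
    define e where "e = c*r + d*t - x"
    have e: "e > 0" using assms \<open>u = ereal r\<close> real by (simp add: e_def)
    show ?thesis
      apply (rule exI[of _ "r - e/(2*c)"], rule exI[of _ "t - e/(2*d)"])
      using e assms \<open>u = ereal r\<close> real by (auto simp: field_simps e_def)
  next
    case PInf
    show ?thesis
      apply (rule exI[of _ "r - 1"], rule exI[of _ "(x - c*(r-1))/d"])
      using assms \<open>u = ereal r\<close> PInf by (auto simp: field_simps zero_ereal_def[symmetric])
  next
    case MInf with assms show ?thesis by simp
  qed
next
  case PInf
  show ?thesis
  proof (cases v)
    case (real t)
    show ?thesis
      apply (rule exI[of _ "(x - d*(t-1))/c"], rule exI[of _ "t - 1"])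
      using assms \<open>u = \<infinity>\<close> real by (auto simp: field_simps zero_ereal_def[symmetric])
  next
    case PInf
    show ?thesis
      apply (rule exI[of _ "x/c"], rule exI[of _ 0])
      using assms \<open>u = \<infinity>\<close> PInf by (auto simp: field_simps zero_ereal_def[symmetric])
  next
    case MInf with assms show ?thesis by simp
  qed
next
  case MInf with assms show ?thesis by simp
qed

lemma cone_inv:
  assumes add: "\<forall>f\<in>A. \<forall>g\<in>A. (\<lambda>x. f x + g x) \<in> A"
    and smul: "\<forall>c. \<forall>f\<in>A. (\<lambda>x. c * f x) \<in> A"
    and const: "\<forall>c. (\<lambda>x. c) \<in> A"
  shows "f \<in> lattice_cone A \<Longrightarrow> f \<omega> \<noteq> -\<infinity> \<and>
     (\<forall>x. ereal x < f \<omega> \<longrightarrow> (\<exists>a\<in>A. (\<forall>k\<in>K. ereal (a k) \<le> f k) \<and> x \<le> a \<omega>))"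
proof (induction rule: lattice_cone.induct)
  case (base a)
  then show ?case by force
next
  case (lincomb f g c d)
  have nf: "f \<omega> \<noteq> -\<infinity>" and ng: "g \<omega> \<noteq> -\<infinity>" using lincomb.IH by auto
  have "ereal c * f \<omega> \<noteq> -\<infinity>" using nf \<open>c \<ge> 0\<close> by (cases "f \<omega>") auto
  moreover have "ereal d * g \<omega> \<noteq> -\<infinity>" using ng \<open>d \<ge> 0\<close> by (cases "g \<omega>") auto
  ultimately have n: "ereal c * f \<omega> + ereal d * g \<omega> \<noteq> -\<infinity>" by simp
  show ?case
  proof (intro conjI allI impI)
    show "ereal c * f \<omega> + ereal d * g \<omega> \<noteq> -\<infinity>" by (rule n)
  next
    fix x assume x: "ereal x < ereal c * f \<omega> + ereal d * g \<omega>"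
    show "\<exists>a\<in>A. (\<forall>k\<in>K. ereal (a k) \<le> ereal c * f k + ereal d * g k) \<and> x \<le> a \<omega>"
    proof (cases "c = 0")
      case c0: True
      show ?thesis
      proof (cases "d = 0")
        case True
        show ?thesis
          apply (rule bexI[of _ "\<lambda>_. x"]) using c0 True x const by (auto simp: zero_ereal_def[symmetric])
      next
        case False
        hence dp: "d > 0" using \<open>d \<ge> 0\<close> by simp
        have "ereal (x/d) < g \<omega>" using x c0 dp by (cases "g \<omega>") (auto simp: field_simps zero_ereal_def[symmetric])
        then obtain a where a: "a \<in> A" "\<forall>k\<in>K. ereal (a k) \<le> g k" "x/d \<le> a \<omega>"
          using lincomb.IH by blast
        show ?thesis
        proof (rule bexI[of _ "\<lambda>y. d * a y"])
          show "(\<lambda>y. d * a y) \<in> A" using smul a by blast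
          show "(\<forall>k\<in>K. ereal (d * a k) \<le> ereal c * f k + ereal d * g k) \<and> x \<le> d * a \<omega>"
          proof (intro conjI ballI)
            fix k assume "k \<in> K"
            have "ereal d * ereal (a k) \<le> ereal d * g k"
              using a \<open>k\<in>K\<close> dp by (intro ereal_mult_left_mono) auto
            then show "ereal (d * a k) \<le> ereal c * f k + ereal d * g k"
              using c0 dp by (simp add: zero_ereal_def[symmetric])
          next
            show "x \<le> d * a \<omega>" using a dp by (simp add: field_simps)
          qed
        qed
      qed
    next
      case False
      hence cp: "c > 0" using \<open>c \<ge> 0\<close> by simp
      show ?thesis
      proof (cases "d = 0")
        case True
        have "ereal (x/c) < f \<omega>" using x True cp by (cases "f \<omega>") (auto simp: field_simps zero_ereal_def[symmetric])
        then obtain a where a: "a \<in> A" "\<forall>k\<in>K. ereal (a k) \<le> f k" "x/c \<le> a \<omega>"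
          using lincomb.IH by blast
        show ?thesis
        proof (rule bexI[of _ "\<lambda>y. c * a y"])
          show "(\<lambda>y. c * a y) \<in> A" using smul a by blast
          show "(\<forall>k\<in>K. ereal (c * a k) \<le> ereal c * f k + ereal d * g k) \<and> x \<le> c * a \<omega>"
          proof (intro conjI ballI)
            fix k assume "k \<in> K"
            have "ereal c * ereal (a k) \<le> ereal c * f k"
              using a \<open>k\<in>K\<close> cp by (intro ereal_mult_left_mono) auto
            then show "ereal (c * a k) \<le> ereal c * f k + ereal d * g k"
              using True cp by (simp add: zero_ereal_def[symmetric])
          next
            show "x \<le> c * a \<omega>" using a cp by (simp add: field_simps)
          qed
        qed
      next
        case False
        hence dp: "d > 0" using \<open>d \<ge> 0\<close> by simp
        obtain x1 x2 where xs: "ereal x1 < f \<omega>" "ereal x2 < g \<omega>" "x = c*x1 + d*x2"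
          using ereal_split[OF nf ng cp dp x] by blast
        obtain a1 where a1: "a1 \<in> A" "\<forall>k\<in>K. ereal (a1 k) \<le> f k" "x1 \<le> a1 \<omega>"
          using lincomb.IH xs by blast
        obtain a2 where a2: "a2 \<in> A" "\<forall>k\<in>K. ereal (a2 k) \<le> g k" "x2 \<le> a2 \<omega>"
          using lincomb.IH xs by blast
        show ?thesis
        proof (rule bexI[of _ "\<lambda>y. c * a1 y + d * a2 y"])
          have "(\<lambda>y. c * a1 y) \<in> A" "(\<lambda>y. d * a2 y) \<in> A" using smul a1 a2 by blast+
          then show "(\<lambda>y. c * a1 y + d * a2 y) \<in> A" using add by fastforce
          have "\<forall>k\<in>K. ereal (c * a1 k + d * a2 k) \<le> ereal c * f k + ereal d * g k"
          proof
            fix k assume "k \<in> K"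
            have "ereal c * ereal (a1 k) \<le> ereal c * f k"
              using a1 \<open>k\<in>K\<close> cp by (intro ereal_mult_left_mono) auto
            moreover have "ereal d * ereal (a2 k) \<le> ereal d * g k"
              using a2 \<open>k\<in>K\<close> dp by (intro ereal_mult_left_mono) auto
            ultimately show "ereal (c * a1 k + d * a2 k) \<le> ereal c * f k + ereal d * g k"
              by (metis add_mono plus_ereal.simps(1) times_ereal.simps(1))
          qed
          moreover have "x \<le> c * a1 \<omega> + d * a2 \<omega>"
            using xs a1 a2 cp dp by (simp add: add_mono)
          ultimately show "(\<forall>k\<in>K. ereal (c * a1 k + d * a2 k) \<le> ereal c * f k + ereal d * g k) \<and>
                 x \<le> c * a1 \<omega> + d * a2 \<omega>" by blast
        qed
      qed
    qed
  qed
next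
  case (sup S)
  obtain f0 where f0: "f0 \<in> S" using sup.hyps by blast
  have "f0 \<omega> \<le> (SUP f\<in>S. f \<omega>)" using f0 by (rule SUP_upper)
  moreover have "f0 \<omega> \<noteq> -\<infinity>" using sup.IH f0 by blast
  ultimately have n: "(SUP f\<in>S. f \<omega>) \<noteq> -\<infinity>" by auto
  show ?case
  proof (intro conjI allI impI)
    show "(SUP f\<in>S. f \<omega>) \<noteq> -\<infinity>" by (rule n)
  next
    fix x assume "ereal x < (SUP f\<in>S. f \<omega>)"
    then obtain f where f: "f \<in> S" "ereal x < f \<omega>" by (auto simp: less_SUP_iff)
    then obtain a where a: "a \<in> A" "\<forall>k\<in>K. ereal (a k) \<le> f k" "x \<le> a \<omega>"
      using sup.IH by blast
    have "\<forall>k\<in>K. ereal (a k) \<le> (SUP f\<in>S. f k)"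
      using a f by (meson SUP_upper order_trans)
    with a show "\<exists>a\<in>A. (\<forall>k\<in>K. ereal (a k) \<le> (SUP f\<in>S. f k)) \<and> x \<le> a \<omega>" by blast
  qed
qed



lemma sup_conv:
  fixes a :: "'a \<Rightarrow> real"
  assumes "K \<noteq> {}" "\<forall>k\<in>K. \<bar>a k\<bar> \<le> B" "\<forall>s. (\<forall>k\<in>K. a k \<le> s) \<longrightarrow> a \<omega> \<le> s"
  shows "ereal (a \<omega>) \<le> (SUP k\<in>K. ereal (a k))"
proof -
  define S where "S = (SUP k\<in>K. ereal (a k))"
  obtain k0 where k0: "k0 \<in> K" using assms by blast
  have "S \<le> ereal B" unfolding S_def using assms(2) by (auto intro!: SUP_least)
  moreover have "ereal (a k0) \<le> S" unfolding S_def using k0 by (rule SUP_upper)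
  ultimately obtain s where s: "S = ereal s" by (cases S) auto
  have "\<forall>k\<in>K. a k \<le> s" using s unfolding S_def by (metis SUP_upper ereal_less_eq(3))
  then have "a \<omega> \<le> s" using assms(3) by blast
  then show ?thesis using s S_def by simp
qed

lemma hull_to_clConv:
  assumes add: "\<forall>f\<in>A. \<forall>g\<in>A. (\<lambda>x. f x + g x) \<in> A"
    and smul: "\<forall>c. \<forall>f\<in>A. (\<lambda>x. c * f x) \<in> A"
    and const: "\<forall>c. (\<lambda>x. c) \<in> A"
    and bnd: "\<forall>a\<in>A. \<exists>B. \<forall>k\<in>K. \<bar>a k\<bar> \<le> B"
    and ne: "K \<noteq> {}"
    and hull: "\<forall>a\<in>A. \<forall>s. (\<forall>k\<in>K. a k \<le> s) \<longrightarrow> a \<omega> \<le> s"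
  shows "\<omega> \<in> clConv (lattice_cone A) K"
  unfolding clConv_def
proof (intro CollectI ballI)
  fix f assume f: "f \<in> lattice_cone A"
  show "f \<omega> \<le> (SUP k\<in>K. f k)"
  proof (rule dense_le)
    fix y assume y: "y < f \<omega>"
    show "y \<le> (SUP k\<in>K. f k)"
    proof (cases y)
      case (real x)
      then obtain a where a: "a \<in> A" "\<forall>k\<in>K. ereal (a k) \<le> f k" "x \<le> a \<omega>"
        using cone_inv[OF add smul const f, of \<omega> K] y by blast
      obtain B where "\<forall>k\<in>K. \<bar>a k\<bar> \<le> B" using bnd a by blast
      then have "ereal (a \<omega>) \<le> (SUP k\<in>K. ereal (a k))"
        using sup_conv[OF ne] hull a by blast
      also have "\<dots> \<le> (SUP k\<in>K. f k)" using a by (intro SUP_mono) auto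
      finally show ?thesis using real a by (meson ereal_less_eq(3) order_trans)
    next
      case PInf with y show ?thesis by simp
    next
      case MInf then show ?thesis by simp
    qed
  qed
qed

lemma clConv_nonempty:
  assumes "(\<lambda>x. 0) \<in> A" "\<omega> \<in> clConv (lattice_cone A) K"
  shows "K \<noteq> {}"
proof
  assume K: "K = {}"
  have "(\<lambda>x. ereal 0) \<in> lattice_cone A" using lattice_cone.base[OF assms(1)] by simp
  moreover have "\<forall>f\<in>lattice_cone A. f \<omega> \<le> (SUP k\<in>K. f k)" using assms(2) unfolding clConv_def by simp
  ultimately have "ereal 0 \<le> (SUP k\<in>K. ereal 0)" by (rule bspec[rotated])
  with K show False by (simp add: bot_ereal_def)
qed

lemma clConv_sub:
  fixes A :: "('a \<Rightarrow> real) set"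
  assumes "(\<lambda>x. 0) \<in> A" "C \<ge> 1" "\<omega> \<in> clConv (lattice_cone A) K" "a \<in> A"
  shows "ereal (a \<omega>) \<le> ereal C * (SUP k\<in>K. ereal \<bar>a k\<bar>)"
proof -
  have ne: "K \<noteq> {}" by (rule clConv_nonempty[OF assms(1) assms(3)])
  then obtain k0 where k0: "k0 \<in> K" by blast
  have "(\<lambda>x. ereal (a x)) \<in> lattice_cone A" using lattice_cone.base[OF assms(4)] .
  moreover have "\<forall>f\<in>lattice_cone A. f \<omega> \<le> (SUP k\<in>K. f k)" using assms(3) unfolding clConv_def by simp
  ultimately have "ereal (a \<omega>) \<le> (SUP k\<in>K. ereal (a k))" by (rule bspec[rotated])
  also have "\<dots> \<le> (SUP k\<in>K. ereal \<bar>a k\<bar>)" by (rule SUP_mono') simp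
  also have "\<dots> \<le> ereal C * (SUP k\<in>K. ereal \<bar>a k\<bar>)"
  proof (rule ereal_le_Cmul[OF _ assms(2)])
    have "0 \<le> ereal \<bar>a k0\<bar>" by simp
    also have "\<dots> \<le> (SUP k\<in>K. ereal \<bar>a k\<bar>)" using k0 by (rule SUP_upper)
    finally show "0 \<le> (SUP k\<in>K. ereal \<bar>a k\<bar>)" .
  qed
  finally show ?thesis .
qed

lemma rhs_nonempty:
  assumes "ereal y \<le> ereal C * (SUP k\<in>K. ereal (g k))" "C \<ge> 1"
  shows "K \<noteq> {}"
proof
  assume "K = {}"
  with assms show False by (simp add: bot_ereal_def)
qed

lemma Hbound:
  assumes "ereal y \<le> ereal C * (SUP k\<in>K. ereal (g k))" "\<forall>k\<in>K. g k \<le> M" "C \<ge> 0"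
  shows "y \<le> C * M"
proof -
  have "(SUP k\<in>K. ereal (g k)) \<le> ereal M" using assms(2) by (auto intro!: SUP_least)
  then have "ereal C * (SUP k\<in>K. ereal (g k)) \<le> ereal C * ereal M"
    using assms(3) by (intro ereal_mult_left_mono) auto
  then have "ereal C * (SUP k\<in>K. ereal (g k)) \<le> ereal (C * M)" by simp
  with assms(1) have "ereal y \<le> ereal (C * M)" by (rule order_trans)
  then show ?thesis by simp
qed

lemma bounded_on_compact:
  fixes a :: "'a::topological_space \<Rightarrow> 'b::real_normed_vector"
  assumes "continuous_on UNIV a" "compact K"
  shows "\<exists>M\<ge>0. \<forall>k\<in>K. norm (a k) \<le> M"
proof -
  have "compact (a ` K)"
    using assms by (meson compact_continuous_image continuous_on_subset subset_UNIV)
  then have "bounded (a ` K)" by (rule compact_imp_bounded)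
  then obtain B where "\<forall>y\<in>a ` K. norm y \<le> B" unfolding bounded_iff by blast
  then show ?thesis by (intro exI[of _ "max B 0"]) auto
qed

lemma pow_closed:
  fixes A :: "('a \<Rightarrow> 'b::monoid_mult) set"
  assumes "\<forall>f\<in>A. \<forall>g\<in>A. (\<lambda>x. f x * g x) \<in> A" "\<forall>c. (\<lambda>x. c) \<in> A" "a \<in> A"
  shows "(\<lambda>x. a x ^ n) \<in> A"
proof (induction n)
  case 0 then show ?case using assms by simp
next
  case (Suc n)
  then have "(\<lambda>x. a x * a x ^ n) \<in> A" using assms(1)[rule_format, OF assms(3) Suc.IH] by simp
  then show ?case by simp
qed



lemma caseA:
  fixes A :: "('a::topological_space \<Rightarrow> real) set"
  assumes RA: "real_CO_algebra A" and K: "compact K" and C: "C \<ge> 1"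
  shows "clConv (lattice_cone A) K =
           {\<omega>. \<forall>a\<in>A. ereal (a \<omega>) \<le> ereal C * (SUP k\<in>K. ereal \<bar>a k\<bar>)}"
proof -
  have cont: "\<forall>f\<in>A. continuous_on UNIV f"
    and add: "\<forall>f\<in>A. \<forall>g\<in>A. (\<lambda>x. f x + g x) \<in> A"
    and mul: "\<forall>f\<in>A. \<forall>g\<in>A. (\<lambda>x. f x * g x) \<in> A"
    and smul: "\<forall>c. \<forall>f\<in>A. (\<lambda>x. c * f x) \<in> A"
    and const: "\<forall>c. (\<lambda>x. c) \<in> A"
    using RA unfolding real_CO_algebra_def by auto
  have bnd0: "\<exists>M\<ge>0. \<forall>k\<in>K. \<bar>a k\<bar> \<le> M" if "a \<in> A" for a
    using bounded_on_compact[of a K] cont that K by auto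
  show ?thesis
  proof (intro equalityI subsetI)
    fix \<omega> assume "\<omega> \<in> clConv (lattice_cone A) K"
    then show "\<omega> \<in> {\<omega>. \<forall>a\<in>A. ereal (a \<omega>) \<le> ereal C * (SUP k\<in>K. ereal \<bar>a k\<bar>)}"
      using clConv_sub[of A C \<omega> K] const C by blast
  next
    fix \<omega> assume "\<omega> \<in> {\<omega>. \<forall>a\<in>A. ereal (a \<omega>) \<le> ereal C * (SUP k\<in>K. ereal \<bar>a k\<bar>)}"
    then have H: "\<forall>a\<in>A. ereal (a \<omega>) \<le> ereal C * (SUP k\<in>K. ereal \<bar>a k\<bar>)" by simp
    have ne: "K \<noteq> {}"
      using rhs_nonempty[OF H[rule_format, OF const[rule_format, of 1]] C] .
    have absb: "\<bar>a \<omega>\<bar> \<le> M" if a: "a \<in> A" and aM: "\<forall>k\<in>K. \<bar>a k\<bar> \<le> M" for a M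
    proof -
      obtain k0 where "k0 \<in> K" using ne by blast
      then have M0: "M \<ge> 0" using aM by force
      have "\<bar>a \<omega>\<bar>^n \<le> C * M^n" for n
      proof -
        have h: "(\<lambda>x. a x ^ n) \<in> A" by (rule pow_closed[OF mul const a])
        have hn: "(\<lambda>x. (-1) * a x ^ n) \<in> A" using smul[rule_format, where c="-1" and f="\<lambda>x. a x ^ n"] h by simp
        have b1: "\<forall>k\<in>K. \<bar>a k ^ n\<bar> \<le> M^n"
          using aM by (simp add: power_abs power_mono)
        have b2: "\<forall>k\<in>K. \<bar>(-1) * a k ^ n\<bar> \<le> M^n" using b1 by simp
        have "a \<omega> ^ n \<le> C * M^n"
          using Hbound[OF H[rule_format, OF h] b1] C by simp
        moreover have "(-1) * a \<omega> ^ n \<le> C * M^n"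
          using Hbound[OF H[rule_format, OF hn] b2] C by simp
        ultimately show ?thesis by (simp add: power_abs[symmetric] abs_le_iff)
      qed
      then show ?thesis using pow_bound[of "\<bar>a \<omega>\<bar>" M C] M0 by simp
    qed
    have hull: "\<forall>a\<in>A. \<forall>s. (\<forall>k\<in>K. a k \<le> s) \<longrightarrow> a \<omega> \<le> s"
    proof (intro ballI allI impI)
      fix a s assume a: "a \<in> A" and as: "\<forall>k\<in>K. a k \<le> s"
      obtain M where M: "M \<ge> 0" "\<forall>k\<in>K. \<bar>a k\<bar> \<le> M" using bnd0[OF a] by blast
      define R where "R = M + \<bar>s\<bar>"
      have g: "(\<lambda>x. a x + (R - s)) \<in> A" using add[rule_format, OF a const[rule_format, of "R - s"]] by simp
      have "\<forall>k\<in>K. \<bar>a k + (R - s)\<bar> \<le> R"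
      proof
        fix k assume "k \<in> K"
        then have "a k \<le> s" "\<bar>a k\<bar> \<le> M" using as M by auto
        then show "\<bar>a k + (R - s)\<bar> \<le> R" unfolding R_def by linarith
      qed
      then have "\<bar>a \<omega> + (R - s)\<bar> \<le> R" using absb[OF g] by simp
      then show "a \<omega> \<le> s" by linarith
    qed
    have bnd: "\<forall>a\<in>A. \<exists>B. \<forall>k\<in>K. \<bar>a k\<bar> \<le> B" using bnd0 by blast
    show "\<omega> \<in> clConv (lattice_cone A) K"
      by (rule hull_to_clConv[OF add smul const bnd ne hull])
  qed
qed



lemma rot: "Re (cnj (sgn z) * z) = cmod z"
proof (cases "z = 0")
  case False
  have "Im z * Im z + Re z * Re z = cmod z * cmod z"
    using cmod_power2[of z] by (simp add: power2_eq_square)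
  with False show ?thesis
    by (simp add: sgn_div_norm complex_mult_cnj[symmetric] mult.commute power2_eq_square field_simps)
qed simp

lemma rot2: "cmod (cnj (sgn z) * w) \<le> cmod w"
  by (cases "z = 0") (simp_all add: norm_mult norm_sgn)

lemma complex_hull:
  fixes B :: "('a \<Rightarrow> complex) set"
  assumes addB: "\<forall>f\<in>B. \<forall>g\<in>B. (\<lambda>x. f x + g x) \<in> B"
    and constB: "\<forall>c. (\<lambda>x. c) \<in> B"
    and ne: "K \<noteq> {}"
    and bndB: "\<forall>b\<in>B. \<exists>M. \<forall>k\<in>K. cmod (b k) \<le> M"
    and H3: "\<forall>b\<in>B. \<forall>M. (\<forall>k\<in>K. cmod (b k) \<le> M) \<longrightarrow> cmod (b \<omega>) \<le> M"
    and b: "b \<in> B" and bs: "\<forall>k\<in>K. Re (b k) \<le> s"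
  shows "Re (b \<omega>) \<le> s"
proof (rule ccontr)
  assume "\<not> Re (b \<omega>) \<le> s"
  then have dp: "Re (b \<omega>) - s > 0" by simp
  define \<delta> where "\<delta> = Re (b \<omega>) - s"
  have dp': "\<delta> > 0" using dp \<delta>_def by simp
  obtain M0 where M0: "\<forall>k\<in>K. cmod (b k) \<le> M0" using bndB b by blast
  define M where "M = max M0 0"
  have M: "M \<ge> 0" "\<forall>k\<in>K. cmod (b k) \<le> M" using M0 unfolding M_def by auto
  define R where "R = M + \<bar>s\<bar> + M^2/\<delta> + 1"
  have R1: "R \<ge> M + \<bar>s\<bar>" unfolding R_def using M dp' by simp
  have "\<delta> * R = \<delta> * (M + \<bar>s\<bar>) + M^2 + \<delta>" unfolding R_def using dp' by (simp add: field_simps)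
  moreover have "\<delta> * (M + \<bar>s\<bar>) \<ge> 0" using dp' M by simp
  ultimately have dR: "\<delta> * R > M^2" using dp' by linarith
  define g where "g = (\<lambda>x. b x + complex_of_real (R - s))"
  have g: "g \<in> B" unfolding g_def using addB[rule_format, OF b constB[rule_format, of "complex_of_real (R - s)"]] by simp
  define M' where "M' = sqrt (R^2 + M^2)"
  have gk: "\<forall>k\<in>K. cmod (g k) \<le> M'"
  proof
    fix k assume k: "k \<in> K"
    have bk: "cmod (b k) \<le> M" "Re (b k) \<le> s" using M bs k by auto
    have "\<bar>Re (b k)\<bar> \<le> cmod (b k)" by (rule abs_Re_le_cmod)
    then have re1: "0 \<le> Re (g k)" "Re (g k) \<le> R" unfolding g_def using bk R1 by auto
    have "\<bar>Im (g k)\<bar> \<le> M" unfolding g_def using abs_Im_le_cmod[of "b k"] bk by simp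
    then have "(Im (g k))^2 \<le> M^2" by (metis abs_ge_zero power2_abs power_mono)
    moreover have "(Re (g k))^2 \<le> R^2" using re1 by (simp add: power_mono)
    ultimately have "(cmod (g k))^2 \<le> R^2 + M^2" using cmod_power2[of "g k"] by linarith
    then show "cmod (g k) \<le> M'" unfolding M'_def by (simp add: real_le_rsqrt)
  qed
  then have "cmod (g \<omega>) \<le> M'" using H3 g by blast
  moreover have "Re (g \<omega>) \<le> cmod (g \<omega>)" by (rule complex_Re_le_cmod)
  moreover have "Re (g \<omega>) = \<delta> + R" unfolding g_def \<delta>_def by simp
  ultimately have "\<delta> + R \<le> M'" by linarith
  moreover have "0 \<le> \<delta> + R" using dp' R1 M by linarith
  ultimately have "(\<delta> + R)^2 \<le> M'^2" by (simp add: power_mono)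
  also have "M'^2 = R^2 + M^2" unfolding M'_def by simp
  finally have "(\<delta> + R)^2 \<le> R^2 + M^2" .
  moreover have "(\<delta> + R)^2 = \<delta>^2 + 2*(\<delta>*R) + R^2" by (simp add: power2_sum)
  moreover have "\<delta>^2 \<ge> 0" "M^2 \<ge> 0" by simp_all
  ultimately show False using dR by linarith
qed



lemma caseB:
  fixes A :: "('a::topological_space \<Rightarrow> real) set" and B :: "('a \<Rightarrow> complex) set"
  assumes CB: "complex_CO_algebra B" and AB: "A = (\<lambda>b x. Re (b x)) ` B"
    and K: "compact K" and C: "C \<ge> 1"
  shows "clConv (lattice_cone A) K =
           {\<omega>. \<forall>a\<in>A. ereal (a \<omega>) \<le> ereal C * (SUP k\<in>K. ereal \<bar>a k\<bar>)} \<and>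
         clConv (lattice_cone A) K =
           {\<omega>. \<forall>b\<in>B. ereal (cmod (b \<omega>)) \<le> ereal C * (SUP k\<in>K. ereal (cmod (b k)))}"
proof -
  have cont: "\<forall>f\<in>B. continuous_on UNIV f"
    and addB: "\<forall>f\<in>B. \<forall>g\<in>B. (\<lambda>x. f x + g x) \<in> B"
    and mulB: "\<forall>f\<in>B. \<forall>g\<in>B. (\<lambda>x. f x * g x) \<in> B"
    and smulB: "\<forall>c. \<forall>f\<in>B. (\<lambda>x. c * f x) \<in> B"
    and constB: "\<forall>c. (\<lambda>x. c) \<in> B"
    using CB unfolding complex_CO_algebra_def by auto
  have inA: "(\<lambda>x. Re (b x)) \<in> A" if "b \<in> B" for b
    unfolding AB using that by (rule image_eqI[rotated]) simp
  have addA: "\<forall>f\<in>A. \<forall>g\<in>A. (\<lambda>x. f x + g x) \<in> A"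
  proof (intro ballI)
    fix f g assume "f \<in> A" "g \<in> A"
    then obtain b1 b2 where b: "b1 \<in> B" "b2 \<in> B" "f = (\<lambda>x. Re (b1 x))" "g = (\<lambda>x. Re (b2 x))"
      using AB by auto
    have "(\<lambda>x. b1 x + b2 x) \<in> B" using addB[rule_format, OF b(1) b(2)] .
    from inA[OF this] b show "(\<lambda>x. f x + g x) \<in> A" by simp
  qed
  have smulA: "\<forall>c. \<forall>f\<in>A. (\<lambda>x. c * f x) \<in> A"
  proof (intro allI ballI)
    fix c f assume "f \<in> A"
    then obtain b1 where b: "b1 \<in> B" "f = (\<lambda>x. Re (b1 x))" using AB by auto
    have "(\<lambda>x. complex_of_real c * b1 x) \<in> B" using smulB[rule_format, OF b(1)] .
    from inA[OF this] b show "(\<lambda>x. c * f x) \<in> A" by simp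
  qed
  have constA: "\<forall>c. (\<lambda>x. c) \<in> A"
  proof
    fix c :: real
    have "(\<lambda>x. complex_of_real c) \<in> B" using constB by blast
    from inA[OF this] show "(\<lambda>x. c) \<in> A" by simp
  qed
  have bndB0: "\<exists>M\<ge>0. \<forall>k\<in>K. cmod (b k) \<le> M" if "b \<in> B" for b
    using bounded_on_compact[of b K] cont that K by auto
  have bndB: "\<forall>b\<in>B. \<exists>M. \<forall>k\<in>K. cmod (b k) \<le> M" using bndB0 by blast
  have bndA: "\<forall>a\<in>A. \<exists>M. \<forall>k\<in>K. \<bar>a k\<bar> \<le> M"
  proof
    fix a assume "a \<in> A"
    then obtain b where b: "b \<in> B" "a = (\<lambda>x. Re (b x))" using AB by auto
    obtain M where "\<forall>k\<in>K. cmod (b k) \<le> M" using bndB b by blast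
    then have "\<forall>k\<in>K. \<bar>a k\<bar> \<le> M" using b abs_Re_le_cmod order_trans by fastforce
    then show "\<exists>M. \<forall>k\<in>K. \<bar>a k\<bar> \<le> M" by blast
  qed
  have fromH3: "\<omega> \<in> clConv (lattice_cone A) K"
    if ne: "K \<noteq> {}"
      and P: "\<And>b M n. b \<in> B \<Longrightarrow> \<forall>k\<in>K. cmod (b k) \<le> M \<Longrightarrow> cmod (b \<omega>) ^ n \<le> C * M ^ n"
    for \<omega>
  proof -
    have H3: "\<forall>b\<in>B. \<forall>M. (\<forall>k\<in>K. cmod (b k) \<le> M) \<longrightarrow> cmod (b \<omega>) \<le> M"
    proof (intro ballI allI impI)
      fix b M assume b: "b \<in> B" and bM: "\<forall>k\<in>K. cmod (b k) \<le> M"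
      obtain k0 where "k0 \<in> K" using ne by blast
      then have "M \<ge> 0" using bM norm_ge_zero order_trans by blast
      then show "cmod (b \<omega>) \<le> M" using pow_bound[of "cmod (b \<omega>)" M C] P[OF b bM] by simp
    qed
    have hull: "\<forall>a\<in>A. \<forall>s. (\<forall>k\<in>K. a k \<le> s) \<longrightarrow> a \<omega> \<le> s"
    proof (intro ballI allI impI)
      fix a s assume "a \<in> A" and as: "\<forall>k\<in>K. a k \<le> s"
      then obtain b where b: "b \<in> B" "a = (\<lambda>x. Re (b x))" using AB by auto
      show "a \<omega> \<le> s" using complex_hull[OF addB constB ne bndB H3 b(1)] as b(2) by simp
    qed
    show ?thesis by (rule hull_to_clConv[OF addA smulA constA bndA ne hull])
  qed
  have sub1: "clConv (lattice_cone A) K \<subseteq>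
           {\<omega>. \<forall>a\<in>A. ereal (a \<omega>) \<le> ereal C * (SUP k\<in>K. ereal \<bar>a k\<bar>)}"
  proof
    fix \<omega> assume "\<omega> \<in> clConv (lattice_cone A) K"
    then show "\<omega> \<in> {\<omega>. \<forall>a\<in>A. ereal (a \<omega>) \<le> ereal C * (SUP k\<in>K. ereal \<bar>a k\<bar>)}"
      using clConv_sub[of A C \<omega> K] constA C by blast
  qed
  have sub1': "{\<omega>. \<forall>a\<in>A. ereal (a \<omega>) \<le> ereal C * (SUP k\<in>K. ereal \<bar>a k\<bar>)}
      \<subseteq> clConv (lattice_cone A) K"
  proof
    fix \<omega> assume "\<omega> \<in> {\<omega>. \<forall>a\<in>A. ereal (a \<omega>) \<le> ereal C * (SUP k\<in>K. ereal \<bar>a k\<bar>)}"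
    then have H: "\<forall>a\<in>A. ereal (a \<omega>) \<le> ereal C * (SUP k\<in>K. ereal \<bar>a k\<bar>)" by simp
    have ne: "K \<noteq> {}"
      using rhs_nonempty[OF H[rule_format, OF constA[rule_format, of 1]] C] .
    show "\<omega> \<in> clConv (lattice_cone A) K"
    proof (rule fromH3[OF ne])
      fix b M n assume b: "b \<in> B" and bM: "\<forall>k\<in>K. cmod (b k) \<le> M"
      define z where "z = b \<omega> ^ n"
      have bn: "(\<lambda>x. b x ^ n) \<in> B" by (rule pow_closed[OF mulB constB b])
      have "(\<lambda>x. cnj (sgn z) * b x ^ n) \<in> B" using smulB[rule_format, OF bn] .
      then have a: "(\<lambda>x. Re (cnj (sgn z) * b x ^ n)) \<in> A" by (rule inA)
      have ak: "\<forall>k\<in>K. \<bar>Re (cnj (sgn z) * b k ^ n)\<bar> \<le> M ^ n"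
      proof
        fix k assume k: "k \<in> K"
        have "\<bar>Re (cnj (sgn z) * b k ^ n)\<bar> \<le> cmod (cnj (sgn z) * b k ^ n)" by (rule abs_Re_le_cmod)
        also have "\<dots> \<le> cmod (b k ^ n)" by (rule rot2)
        also have "\<dots> = cmod (b k) ^ n" by (simp add: norm_power)
        also have "\<dots> \<le> M ^ n" using bM k by (simp add: power_mono)
        finally show "\<bar>Re (cnj (sgn z) * b k ^ n)\<bar> \<le> M ^ n" .
      qed
      have "Re (cnj (sgn z) * b \<omega> ^ n) \<le> C * M ^ n"
        using Hbound[OF H[rule_format, OF a] ak] C by simp
      moreover have "Re (cnj (sgn z) * b \<omega> ^ n) = cmod (b \<omega>) ^ n"
        using rot[of z] unfolding z_def by (simp add: norm_power)
      ultimately show "cmod (b \<omega>) ^ n \<le> C * M ^ n" by simp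
    qed
  qed
  have sub3: "clConv (lattice_cone A) K \<subseteq>
           {\<omega>. \<forall>b\<in>B. ereal (cmod (b \<omega>)) \<le> ereal C * (SUP k\<in>K. ereal (cmod (b k)))}"
  proof
    fix \<omega> assume om: "\<omega> \<in> clConv (lattice_cone A) K"
    have ne: "K \<noteq> {}" by (rule clConv_nonempty[OF _ om]) (use constA in blast)
    then obtain k0 where k0: "k0 \<in> K" by blast
    have cl: "\<forall>f\<in>lattice_cone A. f \<omega> \<le> (SUP k\<in>K. f k)" using om unfolding clConv_def by simp
    have "ereal (cmod (b \<omega>)) \<le> ereal C * (SUP k\<in>K. ereal (cmod (b k)))" if b: "b \<in> B" for b
    proof -
      define z where "z = b \<omega>"
      have "(\<lambda>x. cnj (sgn z) * b x) \<in> B" using smulB[rule_format, OF b] .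
      then have a: "(\<lambda>x. Re (cnj (sgn z) * b x)) \<in> A" by (rule inA)
      have "(\<lambda>x. ereal (Re (cnj (sgn z) * b x))) \<in> lattice_cone A" by (rule lattice_cone.base[OF a])
      with cl have "ereal (Re (cnj (sgn z) * b \<omega>)) \<le> (SUP k\<in>K. ereal (Re (cnj (sgn z) * b k)))"
        by (rule bspec)
      moreover have "Re (cnj (sgn z) * b \<omega>) = cmod (b \<omega>)" using rot[of z] z_def by simp
      moreover have "(SUP k\<in>K. ereal (Re (cnj (sgn z) * b k))) \<le> (SUP k\<in>K. ereal (cmod (b k)))"
      proof (rule SUP_mono')
        fix k
        have "Re (cnj (sgn z) * b k) \<le> cmod (cnj (sgn z) * b k)" by (rule complex_Re_le_cmod)
        also have "\<dots> \<le> cmod (b k)" by (rule rot2)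
        finally show "ereal (Re (cnj (sgn z) * b k)) \<le> ereal (cmod (b k))" by simp
      qed
      moreover have "(SUP k\<in>K. ereal (cmod (b k))) \<le> ereal C * (SUP k\<in>K. ereal (cmod (b k)))"
      proof (rule ereal_le_Cmul[OF _ C])
        have "0 \<le> ereal (cmod (b k0))" by simp
        also have "\<dots> \<le> (SUP k\<in>K. ereal (cmod (b k)))" using k0 by (rule SUP_upper)
        finally show "0 \<le> (SUP k\<in>K. ereal (cmod (b k)))" .
      qed
      ultimately show ?thesis by (metis order_trans)
    qed
    then show "\<omega> \<in> {\<omega>. \<forall>b\<in>B. ereal (cmod (b \<omega>)) \<le> ereal C * (SUP k\<in>K. ereal (cmod (b k)))}"
      by simp
  qed
  have sub3': "{\<omega>. \<forall>b\<in>B. ereal (cmod (b \<omega>)) \<le> ereal C * (SUP k\<in>K. ereal (cmod (b k)))}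
      \<subseteq> clConv (lattice_cone A) K"
  proof
    fix \<omega> assume "\<omega> \<in> {\<omega>. \<forall>b\<in>B. ereal (cmod (b \<omega>)) \<le> ereal C * (SUP k\<in>K. ereal (cmod (b k)))}"
    then have H: "\<forall>b\<in>B. ereal (cmod (b \<omega>)) \<le> ereal C * (SUP k\<in>K. ereal (cmod (b k)))" by simp
    have ne: "K \<noteq> {}"
      using rhs_nonempty[OF H[rule_format, OF constB[rule_format, of 1]] C] .
    show "\<omega> \<in> clConv (lattice_cone A) K"
    proof (rule fromH3[OF ne])
      fix b M n assume b: "b \<in> B" and bM: "\<forall>k\<in>K. cmod (b k) \<le> M"
      have bn: "(\<lambda>x. b x ^ n) \<in> B" by (rule pow_closed[OF mulB constB b])
      have ak: "\<forall>k\<in>K. cmod (b k ^ n) \<le> M ^ n"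
        using bM by (simp add: norm_power power_mono)
      have "cmod (b \<omega> ^ n) \<le> C * M ^ n"
        using Hbound[OF H[rule_format, OF bn] ak] C by simp
      then show "cmod (b \<omega>) ^ n \<le> C * M ^ n" by (simp add: norm_power)
    qed
  qed
  show ?thesis using sub1 sub1' sub3 sub3' by blast
qed


theorem mainTheorem10:
  fixes A :: "('a::topological_space \<Rightarrow> real) set"
  shows
   "(real_CO_algebra A \<longrightarrow>
      (\<forall>K C. compact K \<and> C \<ge> 1 \<longrightarrow>
         clConv (lattice_cone A) K =
           {\<omega>. \<forall>a\<in>A. ereal (a \<omega>) \<le> ereal C * (SUP k\<in>K. ereal \<bar>a k\<bar>)}))
    \<and>
    (\<forall>B :: ('a \<Rightarrow> complex) set.
       complex_CO_algebra B \<and> A = (\<lambda>b x. Re (b x)) ` B \<longrightarrow>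
      (\<forall>K C. compact K \<and> C \<ge> 1 \<longrightarrow>
         clConv (lattice_cone A) K =
           {\<omega>. \<forall>a\<in>A. ereal (a \<omega>) \<le> ereal C * (SUP k\<in>K. ereal \<bar>a k\<bar>)} \<and>
         clConv (lattice_cone A) K =
           {\<omega>. \<forall>b\<in>B. ereal (cmod (b \<omega>)) \<le> ereal C * (SUP k\<in>K. ereal (cmod (b k)))}))"
proof (intro conjI impI allI)
  fix K :: "'a set" and C :: real
  assume "real_CO_algebra A" "compact K \<and> C \<ge> 1"
  then show "clConv (lattice_cone A) K =
           {\<omega>. \<forall>a\<in>A. ereal (a \<omega>) \<le> ereal C * (SUP k\<in>K. ereal \<bar>a k\<bar>)}"
    using caseA by blast
next
  fix B :: "('a \<Rightarrow> complex) set" and K :: "'a set" and C :: real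
  assume h1: "complex_CO_algebra B \<and> A = (\<lambda>b x. Re (b x)) ` B" and h2: "compact K \<and> C \<ge> 1"
  have X: "clConv (lattice_cone A) K =
           {\<omega>. \<forall>a\<in>A. ereal (a \<omega>) \<le> ereal C * (SUP k\<in>K. ereal \<bar>a k\<bar>)} \<and>
         clConv (lattice_cone A) K =
           {\<omega>. \<forall>b\<in>B. ereal (cmod (b \<omega>)) \<le> ereal C * (SUP k\<in>K. ereal (cmod (b k)))}"
    by (rule caseB[OF conjunct1[OF h1] conjunct2[OF h1] conjunct1[OF h2] conjunct2[OF h2]])
  then show "clConv (lattice_cone A) K =
           {\<omega>. \<forall>a\<in>A. ereal (a \<omega>) \<le> ereal C * (SUP k\<in>K. ereal \<bar>a k\<bar>)}" by (rule conjunct1)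
  from X show "clConv (lattice_cone A) K =
           {\<omega>. \<forall>b\<in>B. ereal (cmod (b \<omega>)) \<le> ereal C * (SUP k\<in>K. ereal (cmod (b k)))}" by (rule conjunct2)
qed

end
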